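(* Let $\Pi(x)=\mathbf{T}x$ be a linear CG map, where $\mathbf{T}\in\mathbb{R}^{3M\times3N}$ consists of $3\times3$ blocks $\mathbf{T}_{ij}=\zeta_{ij}\mathbf{I}_3$ ($i=1,\dots,M$, $j=1,\dots,N$, $\zeta_{ij}\in\mathbb{R}$) and has rank $3M$. Let $\mathbf{W}\in\mathbb{R}^{3M\times3N}$ be any constant matrix such that $\mathbf{W}\mathbf{T}^t$ is invertible, and set $h_W(x)=(\mathbf{W}\mathbf{T}^t)^{-1}\mathbf{W}f(x)$. Then (under integrability $h_W\in L^1(\mu)$) $F^{\mathrm{PMF}}(z)=\mathbb{E}_\mu[h_W\mid\Pi=z]$ for all $z\in\mathbb{R}^{3M}$. In particular, with $\mathbf{W}=\mathbf{T}$, $h(x)=(\mathbf{T}\mathbf{T}^t)^{-1}\mathbf{T}f(x)$ satisfies $F^{\mathrm{PMF}}(z)=\mathbb{E}_\mu[h\mid\Pi=z]$.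
   Context: Standing setting: $\beta>0$; $U:\mathbb{R}^{3N}\to\mathbb{R}$ smooth with $Z=\int e^{-\beta U}dx<\infty$; $\mu(dx)=Z^{-1}e^{-\beta U}dx$; $f=-\nabla_xU\in\mathbb{R}^{3N}$ with components $f_j=-\nabla_{x_j}U\in\mathbb{R}^3$, $x=(x_1,\dots,x_N)$, $x_j\in\mathbb{R}^3$. $\bar\mu$ is the Lebesgue density of $\Pi_{\#}\mu$, assumed positive and $C^1$; $\bar U^{\mathrm{PMF}}(z)=-\beta^{-1}\log\bar\mu(z)-\beta^{-1}\log Z$; $F^{\mathrm{PMF}}=-\nabla_z\bar U^{\mathrm{PMF}}$; $\mathbb{E}_\mu[\cdot\mid\Pi=z]$ is conditional expectation given $\Pi=z$. *)

theory Defs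
  imports "HOL-Analysis.Analysis" "HOL-Probability.Probability"
begin

fun iter_dderiv :: "('a::real_normed_vector \<Rightarrow> real) \<Rightarrow> 'a list \<Rightarrow> 'a \<Rightarrow> real" where
  "iter_dderiv f [] = f"
| "iter_dderiv f (v # vs) = (\<lambda>x. frechet_derivative (iter_dderiv f vs) (at x) v)"

definition smooth_fun :: "('a::real_normed_vector \<Rightarrow> real) \<Rightarrow> bool" where
  "smooth_fun f \<longleftrightarrow> (\<forall>vs x. iter_dderiv f vs differentiable (at x))"

definition grad :: "('a::real_inner \<Rightarrow> real) \<Rightarrow> 'a \<Rightarrow> 'a" where
  "grad g x = (THE D. GDERIV g x :> D)"

definition C1_fun :: "('a::real_inner \<Rightarrow> real) \<Rightarrow> bool" where
  "C1_fun g \<longleftrightarrow> (\<forall>x. g differentiable (at x)) \<and> continuous_on UNIV (grad g)"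

definition partition_fn :: "real \<Rightarrow> ('a::euclidean_space \<Rightarrow> real) \<Rightarrow> real" where
  "partition_fn \<beta> U = (\<integral>x. exp (- \<beta> * U x) \<partial>lborel)"

definition gibbs :: "real \<Rightarrow> ('a::euclidean_space \<Rightarrow> real) \<Rightarrow> 'a measure" where
  "gibbs \<beta> U = density lborel (\<lambda>x. ennreal (exp (- \<beta> * U x) / partition_fn \<beta> U))"

definition force :: "('a::euclidean_space \<Rightarrow> real) \<Rightarrow> 'a \<Rightarrow> 'a" where
  "force U x = - grad U x"

definition U_PMF :: "real \<Rightarrow> real \<Rightarrow> ('b::euclidean_space \<Rightarrow> real) \<Rightarrow> 'b \<Rightarrow> real" where
  "U_PMF \<beta> Z mubar z = - (1/\<beta>) * ln (mubar z) - (1/\<beta>) * ln Z"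

definition F_PMF :: "real \<Rightarrow> real \<Rightarrow> ('b::euclidean_space \<Rightarrow> real) \<Rightarrow> 'b \<Rightarrow> 'b" where
  "F_PMF \<beta> Z mubar z = - grad (U_PMF \<beta> Z mubar) z"

text \<open>Linear CG matrix with 3x3 blocks T_ij = zeta_ij I_3; coordinates of R^{3N} are
  indexed by pairs (particle j, spatial coordinate b).\<close>
definition block_cg :: "real^'n^'m \<Rightarrow> real^('n \<times> 3)^('m \<times> 3)" where
  "block_cg \<zeta> = (\<chi> p. \<chi> q. if snd p = snd q then \<zeta> $ fst p $ fst q else 0)"

text \<open>g is (a version of) the conditional expectation z |-> E_M[h | P = z]:
  g is Borel, g o P is integrable and for every Borel set A,
  the integral of h over {P in A} equals that of g(P).\<close>
definition cond_exp_given ::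
  "'a measure \<Rightarrow> ('a \<Rightarrow> 'b::euclidean_space) \<Rightarrow> ('a \<Rightarrow> 'c::euclidean_space) \<Rightarrow> ('b \<Rightarrow> 'c) \<Rightarrow> bool" where
  "cond_exp_given M P h g \<longleftrightarrow>
     g \<in> borel_measurable borel \<and> integrable M (\<lambda>x. g (P x)) \<and>
     (\<forall>A \<in> sets borel. (\<integral>x. indicator (P -` A) x *\<^sub>R h x \<partial>M)
                      = (\<integral>x. indicator (P -` A) x *\<^sub>R g (P x) \<partial>M))"

end

theory Submission
  imports Defs
begin


lemma lborel_integral_shift:
  fixes f :: "'a::euclidean_space \<Rightarrow> real" and c :: 'a
  assumes f[measurable]: "f \<in> borel_measurable borel"
  shows "(\<integral>x. f x \<partial>lborel) = (\<integral>x. f (c + x) \<partial>lborel)"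
proof -
  have "(\<integral>x. f (c + x) \<partial>lborel) = integral\<^sup>L (distr lborel borel ((+) c)) f"
    by (rule integral_distr[symmetric]) auto
  also have "\<dots> = integral\<^sup>L lborel f" by (simp add: lborel_distr_plus)
  finally show ?thesis by simp
qed

lemma lborel_integrable_shift:
  fixes f :: "'a::euclidean_space \<Rightarrow> real" and c :: 'a
  assumes f[measurable]: "f \<in> borel_measurable borel"
  shows "integrable lborel f \<longleftrightarrow> integrable lborel (\<lambda>x. f (c + x))"
proof -
  have "integrable lborel (\<lambda>x. f (c + x)) \<longleftrightarrow> integrable (distr lborel borel ((+) c)) f"
    by (rule integrable_distr_eq[symmetric]) auto
  also have "\<dots> \<longleftrightarrow> integrable lborel f" by (simp add: lborel_distr_plus)
  finally show ?thesis by simp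
qed

lemma lborel_nn_integral_shift:
  fixes f :: "'a::euclidean_space \<Rightarrow> ennreal" and c :: 'a
  assumes f[measurable]: "f \<in> borel_measurable borel"
  shows "(\<integral>\<^sup>+x. f x \<partial>lborel) = (\<integral>\<^sup>+x. f (c + x) \<partial>lborel)"
proof -
  have "(\<integral>\<^sup>+x. f (c + x) \<partial>lborel) = integral\<^sup>N (distr lborel borel ((+) c)) f"
    by (rule nn_integral_distr[symmetric]) auto
  also have "\<dots> = integral\<^sup>N lborel f" by (simp add: lborel_distr_plus)
  finally show ?thesis by simp
qed



lemma q_side:
  fixes L :: "'a::euclidean_space \<Rightarrow> 'b::euclidean_space" and q w :: "'a \<Rightarrow> real"
    and v :: 'a and e :: 'b and B :: "'b set" and s :: real
  assumes L: "linear L" and Lv: "L v = e" and B[measurable]: "B \<in> sets borel"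
    and qd: "\<And>x t. ((\<lambda>t. q (x - t *\<^sub>R v)) has_real_derivative w (x - t *\<^sub>R v)) (at t)"
    and wc: "continuous_on UNIV w" and qc: "continuous_on UNIV q"
    and wi: "integrable lborel w"
    and s: "s \<ge> 0"
  shows "(\<integral>x. indicator B (L x) * (q x - q (x - s *\<^sub>R v)) \<partial>lborel)
       = - (\<integral>x. w x * (\<integral>t. indicator {0..s} t * indicator B (L x + t *\<^sub>R e) \<partial>lborel) \<partial>lborel)"
proof -
  have Lm[measurable]: "L \<in> borel_measurable borel"
    using L by (intro borel_measurable_continuous_onI linear_continuous_on linear_conv_bounded_linear[THEN iffD1])
  have wm[measurable]: "w \<in> borel_measurable borel" using wc by (rule borel_measurable_continuous_onI)
  have qm[measurable]: "q \<in> borel_measurable borel" using qc by (rule borel_measurable_continuous_onI)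
  have Ladd: "L (x + y) = L x + L y" for x y using L by (simp add: linear_add)
  have Lsc: "L (c *\<^sub>R x) = c *\<^sub>R L x" for c x using L by (simp add: linear_scale)
  have ftc: "(\<integral>t. indicator {0..s} t * w (x - t *\<^sub>R v) \<partial>lborel) = q (x - s *\<^sub>R v) - q x" for x
  proof -
    have "(\<integral>t. indicator {0..s} t *\<^sub>R w (x - t *\<^sub>R v) \<partial>lborel) = q (x - s *\<^sub>R v) - q (x - 0 *\<^sub>R v)"
    proof (rule integral_FTC_atLeastAtMost[OF s])
      fix t assume "0 \<le> t" "t \<le> s"
      show "((\<lambda>t. q (x - t *\<^sub>R v)) has_vector_derivative w (x - t *\<^sub>R v)) (at t within {0..s})"
        using qd[of x t] by (simp add: has_real_derivative_iff_has_vector_derivative has_vector_derivative_at_within)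
    next
      show "continuous_on {0..s} (\<lambda>t. w (x - t *\<^sub>R v))"
        by (intro continuous_on_compose2[OF wc] continuous_intros) auto
    qed
    then show ?thesis by simp
  qed
  have wshift: "integrable lborel (\<lambda>x. w (c + x))" for c
    using wi lborel_integrable_shift[of w c] by simp
  have wshift': "integrable lborel (\<lambda>x. w (x - t *\<^sub>R v))" for t
    using wshift[of "- t *\<^sub>R v"] by (simp add: algebra_simps)
  define F1 where "F1 = (\<lambda>(t::real, x::'a). indicator {0..s} t * (indicator B (L x) * w (x - t *\<^sub>R v)))"
  define F2 where "F2 = (\<lambda>(t::real, x::'a). indicator {0..s} t * (indicator B (L x + t *\<^sub>R e) * w x))"
  have F1m[measurable]: "F1 \<in> borel_measurable (lborel \<Otimes>\<^sub>M lborel)"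
    unfolding F1_def by measurable
  have F2m[measurable]: "F2 \<in> borel_measurable (lborel \<Otimes>\<^sub>M lborel)"
    unfolding F2_def by measurable
  have C: "(\<integral>x. norm (w x) \<partial>lborel) = (\<integral>x. norm (w (c + x)) \<partial>lborel)" for c
    by (rule lborel_integral_shift) auto
  have F1i: "integrable (lborel \<Otimes>\<^sub>M lborel) F1"
  proof (rule lborel_pair.Fubini_integrable)
    show "integrable lborel (\<lambda>t. \<integral>x. norm (F1 (t, x)) \<partial>lborel)"
    proof (rule Bochner_Integration.integrable_bound)
      show "integrable lborel (\<lambda>t. indicator {0..s} t * (\<integral>x. norm (w x) \<partial>lborel))"
        by (intro integrable_mult_left integrable_real_indicator) (use s in auto)
      show "(\<lambda>t. \<integral>x. norm (F1 (t, x)) \<partial>lborel) \<in> borel_measurable lborel"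
        by measurable
      show "AE t in lborel. norm (\<integral>x. norm (F1 (t, x)) \<partial>lborel) \<le> norm (indicator {0..s} t * (\<integral>x. norm (w x) \<partial>lborel))"
      proof (rule AE_I2)
        fix t
        have i1: "integrable lborel (\<lambda>x. norm (w (x - t *\<^sub>R v)))" using integrable_norm[OF wshift'[of t]] .
        have i2: "integrable lborel (\<lambda>x. norm (F1 (t, x)))"
          by (rule Bochner_Integration.integrable_bound[OF i1]) (auto simp: F1_def indicator_def abs_mult)
        have "(\<integral>x. norm (F1 (t, x)) \<partial>lborel) \<le> (\<integral>x. indicator {0..s} t * norm (w (x - t *\<^sub>R v)) \<partial>lborel)"
          by (rule Bochner_Integration.integral_mono[OF i2]) (auto intro!: integrable_mult_right i1[simplified] simp: F1_def indicator_def abs_mult)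
        also have "\<dots> = indicator {0..s} t * (\<integral>x. norm (w x) \<partial>lborel)"
          using C[of "- t *\<^sub>R v"] by (simp add: algebra_simps)
        finally show "norm (\<integral>x. norm (F1 (t, x)) \<partial>lborel) \<le> norm (indicator {0..s} t * (\<integral>x. norm (w x) \<partial>lborel))"
          by (simp add: integral_nonneg_AE)
      qed
    qed
    show "AE t in lborel. integrable lborel (\<lambda>x. F1 (t, x))"
    proof (rule AE_I2)
      fix t show "integrable lborel (\<lambda>x. F1 (t, x))"
        unfolding F1_def
        by (rule Bochner_Integration.integrable_bound[OF wshift'[of t]]) (auto simp: indicator_def)
    qed
  qed (fact F1m)
  have F2i: "integrable (lborel \<Otimes>\<^sub>M lborel) F2"
  proof (rule lborel_pair.Fubini_integrable)
    show "integrable lborel (\<lambda>t. \<integral>x. norm (F2 (t, x)) \<partial>lborel)"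
    proof (rule Bochner_Integration.integrable_bound)
      show "integrable lborel (\<lambda>t. indicator {0..s} t * (\<integral>x. norm (w x) \<partial>lborel))"
        by (intro integrable_mult_left integrable_real_indicator) (use s in auto)
      show "(\<lambda>t. \<integral>x. norm (F2 (t, x)) \<partial>lborel) \<in> borel_measurable lborel"
        by measurable
      show "AE t in lborel. norm (\<integral>x. norm (F2 (t, x)) \<partial>lborel) \<le> norm (indicator {0..s} t * (\<integral>x. norm (w x) \<partial>lborel))"
      proof (rule AE_I2)
        fix t
        have i1: "integrable lborel (\<lambda>x. norm (w x))" using integrable_norm[OF wi] .
        have i2: "integrable lborel (\<lambda>x. norm (F2 (t, x)))"
          by (rule Bochner_Integration.integrable_bound[OF i1]) (auto simp: F2_def indicator_def abs_mult)
        have "(\<integral>x. norm (F2 (t, x)) \<partial>lborel) \<le> (\<integral>x. indicator {0..s} t * norm (w x) \<partial>lborel)"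
          by (rule Bochner_Integration.integral_mono[OF i2]) (auto intro!: integrable_mult_right i1[simplified] simp: F2_def indicator_def abs_mult)
        also have "\<dots> = indicator {0..s} t * (\<integral>x. norm (w x) \<partial>lborel)"
          by simp
        finally show "norm (\<integral>x. norm (F2 (t, x)) \<partial>lborel) \<le> norm (indicator {0..s} t * (\<integral>x. norm (w x) \<partial>lborel))"
          by (simp add: integral_nonneg_AE)
      qed
    qed
    show "AE t in lborel. integrable lborel (\<lambda>x. F2 (t, x))"
    proof (rule AE_I2)
      fix t show "integrable lborel (\<lambda>x. F2 (t, x))"
        unfolding F2_def
        by (rule Bochner_Integration.integrable_bound[OF wi]) (auto simp: indicator_def)
    qed
  qed (fact F2m)
  have "(\<integral>x. indicator B (L x) * (q x - q (x - s *\<^sub>R v)) \<partial>lborel)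
      = - (\<integral>x. \<integral>t. F1 (t, x) \<partial>lborel \<partial>lborel)"
  proof -
    have "indicator B (L x) * (q x - q (x - s *\<^sub>R v)) = - (\<integral>t. F1 (t, x) \<partial>lborel)" for x
    proof -
      have "(\<integral>t. F1 (t, x) \<partial>lborel) = indicator B (L x) * (\<integral>t. indicator {0..s} t * w (x - t *\<^sub>R v) \<partial>lborel)"
        unfolding F1_def by (simp add: mult.left_commute)
      then show ?thesis using ftc[of x] by (simp add: algebra_simps)
    qed
    then show ?thesis by simp
  qed
  also have "(\<integral>x. \<integral>t. F1 (t, x) \<partial>lborel \<partial>lborel) = (\<integral>t. \<integral>x. F1 (t, x) \<partial>lborel \<partial>lborel)"
    using lborel_pair.Fubini_integral[of "\<lambda>t x. F1 (t, x)"] F1i by simp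
  also have "\<dots> = (\<integral>t. \<integral>x. F2 (t, x) \<partial>lborel \<partial>lborel)"
  proof (rule Bochner_Integration.integral_cong[OF refl])
    fix t
    have "(\<integral>x. F1 (t, x) \<partial>lborel) = (\<integral>x. F1 (t, t *\<^sub>R v + x) \<partial>lborel)"
      by (rule lborel_integral_shift) (simp add: F1_def)
    also have "\<dots> = (\<integral>x. F2 (t, x) \<partial>lborel)"
      by (simp add: F1_def F2_def Ladd Lsc Lv add.commute)
    finally show "(\<integral>x. F1 (t, x) \<partial>lborel) = (\<integral>x. F2 (t, x) \<partial>lborel)" .
  qed
  also have "\<dots> = (\<integral>x. \<integral>t. F2 (t, x) \<partial>lborel \<partial>lborel)"
    using lborel_pair.Fubini_integral[of "\<lambda>t x. F2 (t, x)"] F2i by simp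
  also have "\<dots> = (\<integral>x. w x * (\<integral>t. indicator {0..s} t * indicator B (L x + t *\<^sub>R e) \<partial>lborel) \<partial>lborel)"
    by (simp add: F2_def mult.commute mult.left_commute)
  finally show ?thesis .
qed



definition hbox :: "('b::euclidean_space \<Rightarrow> real) \<Rightarrow> ('b \<Rightarrow> real) \<Rightarrow> 'b set" where
  "hbox a b = {z. \<forall>i\<in>Basis. a i \<le> z \<bullet> i \<and> z \<bullet> i < b i}"

lemma hbox_borel[measurable]: "hbox a b \<in> sets borel"
proof -
  have "hbox a b = (\<Inter>i\<in>Basis. {z. a i \<le> z \<bullet> i} \<inter> {z. z \<bullet> i < b i})"
    by (auto simp: hbox_def)
  also have "\<dots> \<in> sets borel" by (intro sets.finite_INT) auto
  finally show ?thesis .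
qed

lemma box_right_cont:
  fixes y e :: "'b::euclidean_space"
  assumes e: "e \<in> Basis"
  shows "\<exists>\<delta>>0. \<forall>t. 0 \<le> t \<and> t < \<delta> \<longrightarrow> (y + t *\<^sub>R e \<in> hbox a b \<longleftrightarrow> y \<in> hbox a b)"
proof -
  have comp: "(y + t *\<^sub>R e) \<bullet> i = y \<bullet> i + (if i = e then t else 0)" if "i \<in> Basis" for i t
    using that e by (auto simp: inner_add_left inner_Basis)
  show ?thesis
  proof (cases "y \<in> hbox a b")
    case True
    then have "b e - y \<bullet> e > 0" using e by (auto simp: hbox_def)
    then show ?thesis
      using True by (intro exI[of _ "b e - y \<bullet> e"]) (auto simp: hbox_def comp)
  next
    case False
    then obtain i where i: "i \<in> Basis" "\<not> (a i \<le> y \<bullet> i \<and> y \<bullet> i < b i)" by (auto simp: hbox_def)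
    show ?thesis
    proof (cases "i = e \<and> y \<bullet> i < a i")
      case True
      then have "a e - y \<bullet> e > 0" by auto
      then show ?thesis using True i False
        by (intro exI[of _ "a e - y \<bullet> e"]) (auto simp: hbox_def comp)
    next
      case False2: False
      have "y + t *\<^sub>R e \<notin> hbox a b" if "0 \<le> t" for t
      proof
        assume "y + t *\<^sub>R e \<in> hbox a b"
        then have "a i \<le> (y + t *\<^sub>R e) \<bullet> i \<and> (y + t *\<^sub>R e) \<bullet> i < b i" using i by (auto simp: hbox_def)
        then show False using i False2 that comp[OF i(1), of t] by (auto split: if_splits)
      qed
      then show ?thesis using False by (intro exI[of _ 1]) auto
    qed
  qed
qed

lemma inner_int_limit:
  fixes y e :: "'b::euclidean_space"
  assumes e: "e \<in> Basis"
  shows "(\<lambda>n. (1 / (1 / real (Suc n))) * (\<integral>t. indicator {0..1 / real (Suc n)} t * indicator (hbox a b) (y + t *\<^sub>R e) \<partial>lborel))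
           \<longlonglongrightarrow> indicator (hbox a b) y"
proof -
  obtain \<delta> where d: "\<delta> > 0" "\<And>t. 0 \<le> t \<Longrightarrow> t < \<delta> \<Longrightarrow> (y + t *\<^sub>R e \<in> hbox a b \<longleftrightarrow> y \<in> hbox a b)"
    using box_right_cont[OF e, of y a b] by blast
  obtain N where N: "1 / real (Suc N) < \<delta>"
    using d(1) by (metis nat_approx_posE)
  have "eventually (\<lambda>n. (1 / (1 / real (Suc n))) * (\<integral>t. indicator {0..1 / real (Suc n)} t * indicator (hbox a b) (y + t *\<^sub>R e) \<partial>lborel)
           = indicator (hbox a b) y) sequentially"
    unfolding eventually_sequentially
  proof (intro exI[of _ N] allI impI)
    fix n assume "N \<le> n"
    then have sl: "1 / real (Suc n) < \<delta>"
      using N by (smt (verit, best) frac_le of_nat_0_less_iff of_nat_le_iff zero_less_Suc Suc_le_mono)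
    have "(\<integral>t. indicator {0..1 / real (Suc n)} t * indicator (hbox a b) (y + t *\<^sub>R e) \<partial>lborel) =
          (\<integral>t. indicator {0..1 / real (Suc n)} t * (indicator (hbox a b) y :: real) \<partial>lborel)"
    proof (rule Bochner_Integration.integral_cong[OF refl])
      fix t :: real assume "t \<in> space lborel"
      show "indicator {0..1 / real (Suc n)} t * indicator (hbox a b) (y + t *\<^sub>R e) =
                  indicator {0..1 / real (Suc n)} t * (indicator (hbox a b) y :: real)"
        using d(2)[of t] sl by (auto simp: indicator_def)
    qed
    also have "\<dots> = (1 / real (Suc n)) * (indicator (hbox a b) y :: real)"
      by simp
    finally show "(1 / (1 / real (Suc n))) * (\<integral>t. indicator {0..1 / real (Suc n)} t * indicator (hbox a b) (y + t *\<^sub>R e) \<partial>lborel)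
           = indicator (hbox a b) y" by simp
  qed
  then show ?thesis by (rule tendsto_eventually)
qed

lemma inner_int_bound:
  fixes y e :: "'b::euclidean_space"
  assumes s: "s \<ge> 0" and B[measurable]: "B \<in> sets borel"
  shows "\<bar>\<integral>t. indicator {0..s} t * indicator B (y + t *\<^sub>R e) \<partial>lborel\<bar> \<le> s"
proof -
  have ii: "integrable lborel (indicat_real {0..s})"
    by (intro integrable_real_indicator) (use s in auto)
  have "\<bar>\<integral>t. indicator {0..s} t * indicator B (y + t *\<^sub>R e) \<partial>lborel\<bar>
      \<le> (\<integral>t. (indicator {0..s} t :: real) \<partial>lborel)"
  proof (rule Bochner_Integration.integral_abs_bound_integral)
    show "integrable lborel (indicat_real {0..s})" by (rule ii)
    show "integrable lborel (\<lambda>t. indicator {0..s} t * indicator B (y + t *\<^sub>R e) :: real)"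
      by (rule Bochner_Integration.integrable_bound[OF ii]) (auto simp: indicator_def)
  qed (auto simp: indicator_def)
  also have "\<dots> = s" using s by simp
  finally show ?thesis .
qed



lemma hbox_bounded: "\<exists>r. \<forall>z\<in>hbox a b. norm z \<le> r"
proof (intro exI ballI)
  fix z assume z: "z \<in> hbox a b"
  have "norm z \<le> (\<Sum>i\<in>Basis. \<bar>z \<bullet> i\<bar>)" by (rule norm_le_l1)
  also have "\<dots> \<le> (\<Sum>i\<in>Basis. \<bar>a i\<bar> + \<bar>b i\<bar>)"
    using z by (intro sum_mono) (auto simp: hbox_def)
  finally show "norm z \<le> (\<Sum>i\<in>Basis. \<bar>a i\<bar> + \<bar>b i\<bar>)" .
qed

lemma hbox_finite: "emeasure lborel (hbox a b) < \<infinity>"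
proof -
  obtain r where "\<forall>z\<in>hbox a b. norm z \<le> r" using hbox_bounded by blast
  then have "bounded (hbox a b)" by (auto simp: bounded_iff)
  then show ?thesis by (rule emeasure_bounded_finite)
qed

lemma mubar_side:
  fixes m d :: "'b::euclidean_space \<Rightarrow> real" and e :: 'b
  assumes md: "\<And>z t. ((\<lambda>t. m (z + t *\<^sub>R e)) has_real_derivative d (z + t *\<^sub>R e)) (at t)"
    and dc: "continuous_on UNIV d" and mc: "continuous_on UNIV m"
  shows "(\<lambda>n. \<integral>z. indicator (hbox a b) z * ((m z - m (z - (1 / real (Suc n)) *\<^sub>R e)) / (1 / real (Suc n))) \<partial>lborel)
          \<longlonglongrightarrow> (\<integral>z. indicator (hbox a b) z * d z \<partial>lborel)"
proof -
  let ?s = "\<lambda>n::nat. 1 / real (Suc n)"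
  obtain r where r: "\<And>z. z \<in> hbox a b \<Longrightarrow> norm z \<le> r" using hbox_bounded by blast
  let ?K = "cball (0::'b) (r + norm e)"
  have "compact (d ` ?K)"
    by (intro compact_continuous_image continuous_on_subset[OF dc]) auto
  then obtain M where M: "\<And>y. y \<in> ?K \<Longrightarrow> \<bar>d y\<bar> \<le> M"
    using compact_imp_bounded by (force simp: bounded_iff)
  have dm[measurable]: "d \<in> borel_measurable borel" using dc by (rule borel_measurable_continuous_onI)
  have mm[measurable]: "m \<in> borel_measurable borel" using mc by (rule borel_measurable_continuous_onI)
  show ?thesis
  proof (rule integral_dominated_convergence[where w="\<lambda>z. indicator (hbox a b) z * M"])
    show "integrable lborel (\<lambda>z. indicator (hbox a b) z * M)"
      using hbox_finite[of a b] by (intro integrable_mult_left integrable_real_indicator) (auto simp: top_unique)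
    show "(\<lambda>z. indicator (hbox a b) z * d z) \<in> borel_measurable lborel" by measurable
    show "(\<lambda>z. indicator (hbox a b) z * ((m z - m (z - ?s n *\<^sub>R e)) / ?s n)) \<in> borel_measurable lborel" for n
      by measurable
    show "AE z in lborel. (\<lambda>n. indicator (hbox a b) z * ((m z - m (z - ?s n *\<^sub>R e)) / ?s n))
            \<longlonglongrightarrow> indicator (hbox a b) z * d z"
    proof (rule AE_I2, rule tendsto_mult_left)
      fix z
      let ?g = "\<lambda>t. m (z + t *\<^sub>R e)"
      have "DERIV ?g 0 :> d z" using md[of z 0] by simp
      then have lim: "((\<lambda>h. (?g (0 + h) - ?g 0) / h) \<longlongrightarrow> d z) (at 0)" by (simp add: DERIV_def)
      have hl: "filterlim (\<lambda>n. - ?s n) (at 0) sequentially"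
      proof (rule filterlim_atI)
        show "(\<lambda>n. - ?s n) \<longlonglongrightarrow> 0"
          using tendsto_minus[OF LIMSEQ_Suc[OF lim_inverse_n']] by (simp add: divide_inverse)
        show "eventually (\<lambda>n. - ?s n \<noteq> 0) sequentially" by simp
      qed
      have "(\<lambda>n. (?g (0 + - ?s n) - ?g 0) / (- ?s n)) \<longlonglongrightarrow> d z"
        by (rule filterlim_compose[OF lim hl])
      moreover have "(?g (0 + - ?s n) - ?g 0) / (- ?s n) = (m z - m (z - ?s n *\<^sub>R e)) / ?s n" for n
        by (simp add: field_simps)
      ultimately show "(\<lambda>n. (m z - m (z - ?s n *\<^sub>R e)) / ?s n) \<longlonglongrightarrow> d z" by simp
    qed
    show "AE z in lborel. norm (indicator (hbox a b) z * ((m z - m (z - ?s n *\<^sub>R e)) / ?s n)) \<le> indicator (hbox a b) z * M" for n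
    proof (rule AE_I2)
      fix z
      show "norm (indicator (hbox a b) z * ((m z - m (z - ?s n *\<^sub>R e)) / ?s n)) \<le> indicator (hbox a b) z * M"
      proof (cases "z \<in> hbox a b")
        case False then show ?thesis by simp
      next
        case True
        let ?g = "\<lambda>t. m (z + t *\<^sub>R e)"
        have sp: "?s n > 0" "?s n \<le> 1" by (auto simp: field_simps)
        obtain \<xi> where xi: "- ?s n < \<xi>" "\<xi> < 0" "?g 0 - ?g (- ?s n) = (0 - - ?s n) * d (z + \<xi> *\<^sub>R e)"
          using MVT2[of "- ?s n" 0 ?g "\<lambda>t. d (z + t *\<^sub>R e)"] md[of z] sp by auto
        have xi1: "\<bar>\<xi>\<bar> \<le> 1" using xi(1,2) sp(2) by linarith
        have "norm (z + \<xi> *\<^sub>R e) \<le> norm z + \<bar>\<xi>\<bar> * norm e"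
          by (metis norm_scaleR norm_triangle_ineq)
        also have "\<dots> \<le> r + 1 * norm e"
          using r[OF True] xi1 by (intro add_mono mult_right_mono) auto
        finally have inK: "z + \<xi> *\<^sub>R e \<in> ?K" by simp
        have "(m z - m (z - ?s n *\<^sub>R e)) / ?s n = d (z + \<xi> *\<^sub>R e)"
          using xi(3) sp by (simp add: field_simps)
        then show ?thesis using True M[OF inK] by simp
      qed
    qed
  qed
qed



lemma box_identity:
  fixes L :: "'a::euclidean_space \<Rightarrow> 'b::euclidean_space" and q w :: "'a \<Rightarrow> real"
    and v :: 'a and e :: 'b and m d :: "'b \<Rightarrow> real"
  assumes L: "linear L" and Lv: "L v = e" and e: "e \<in> Basis"
    and qd: "\<And>x t. ((\<lambda>t. q (x - t *\<^sub>R v)) has_real_derivative w (x - t *\<^sub>R v)) (at t)"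
    and wc: "continuous_on UNIV w" and qc: "continuous_on UNIV q"
    and wi: "integrable lborel w" and qi: "integrable lborel q"
    and md: "\<And>z t. ((\<lambda>t. m (z + t *\<^sub>R e)) has_real_derivative d (z + t *\<^sub>R e)) (at t)"
    and dc: "continuous_on UNIV d" and mc: "continuous_on UNIV m" and mi: "integrable lborel m"
    and push: "\<And>A. A \<in> sets borel \<Longrightarrow> (\<integral>x. indicator A (L x) * q x \<partial>lborel) = (\<integral>z. indicator A z * m z \<partial>lborel)"
  shows "(\<integral>z. indicator (hbox a b) z * d z \<partial>lborel) = - (\<integral>x. indicator (hbox a b) (L x) * w x \<partial>lborel)"
proof -
  let ?s = "\<lambda>n::nat. 1 / real (Suc n)"
  let ?B = "hbox a b"
  have Lm[measurable]: "L \<in> borel_measurable borel"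
    using L by (intro borel_measurable_continuous_onI linear_continuous_on linear_conv_bounded_linear[THEN iffD1])
  have wm[measurable]: "w \<in> borel_measurable borel" using wc by (rule borel_measurable_continuous_onI)
  have qm[measurable]: "q \<in> borel_measurable borel" using qc by (rule borel_measurable_continuous_onI)
  have mm[measurable]: "m \<in> borel_measurable borel" using mc by (rule borel_measurable_continuous_onI)
  have Ladd: "L (x + y) = L x + L y" for x y using L by (simp add: linear_add)
  have Lsc: "L (c *\<^sub>R x) = c *\<^sub>R L x" for c x using L by (simp add: linear_scale)
  have ind_int: "integrable lborel (\<lambda>x. indicator A x * f x)" if "integrable lborel f" "A \<in> sets borel" for A and f :: "'c::euclidean_space \<Rightarrow> real"
    using that by (intro Bochner_Integration.integrable_bound[OF that(1)]) (auto simp: indicator_def)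
  have mshift: "integrable lborel (\<lambda>z. m (c + z))" for c using mi lborel_integrable_shift[of m c] by simp
  have qshift: "integrable lborel (\<lambda>z. q (c + z))" for c using qi lborel_integrable_shift[of q c] by simp
  have As: "(\<integral>z. indicator ?B z * (m z - m (z - s *\<^sub>R e)) \<partial>lborel)
       = - (\<integral>x. w x * (\<integral>t. indicator {0..s} t * indicator ?B (L x + t *\<^sub>R e) \<partial>lborel) \<partial>lborel)"
    if s: "s \<ge> 0" for s
  proof -
    have i1: "integrable lborel (\<lambda>z. indicator ?B z * m z)" by (rule ind_int[OF mi]) simp
    have i2: "integrable lborel (\<lambda>z. indicator ?B z * m (z - s *\<^sub>R e))"
      by (rule ind_int) (use mshift[of "- s *\<^sub>R e"] in auto)
    have j1: "integrable lborel (\<lambda>x. indicator ?B (L x) * q x)"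
      by (rule Bochner_Integration.integrable_bound[OF qi]) (auto simp: indicator_def)
    have j2: "integrable lborel (\<lambda>x. indicator ?B (L x) * q (x - s *\<^sub>R v))"
      by (rule Bochner_Integration.integrable_bound[OF qshift[of "- s *\<^sub>R v"]]) (auto simp: indicator_def)
    have "(\<integral>z. indicator ?B z * m (z - s *\<^sub>R e) \<partial>lborel) = (\<integral>z. indicator ?B (s *\<^sub>R e + z) * m z \<partial>lborel)"
      by (subst lborel_integral_shift[where c="s *\<^sub>R e"]) (auto simp: algebra_simps)
    also have "\<dots> = (\<integral>z. indicator ((\<lambda>z. s *\<^sub>R e + z) -` ?B) z * m z \<partial>lborel)"
      by (simp add: indicator_def)
    also have "\<dots> = (\<integral>x. indicator ((\<lambda>z. s *\<^sub>R e + z) -` ?B) (L x) * q x \<partial>lborel)"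
      by (rule push[symmetric], rule measurable_sets_borel[OF _ hbox_borel]) simp
    also have "\<dots> = (\<integral>x. indicator ?B (L (s *\<^sub>R v + x)) * q x \<partial>lborel)"
      by (simp add: indicator_def Ladd Lsc Lv)
    also have "\<dots> = (\<integral>x. indicator ?B (L x) * q (x - s *\<^sub>R v) \<partial>lborel)"
      by (subst lborel_integral_shift[where c="- s *\<^sub>R v"]) (auto simp: algebra_simps)
    finally have e2: "(\<integral>z. indicator ?B z * m (z - s *\<^sub>R e) \<partial>lborel) = (\<integral>x. indicator ?B (L x) * q (x - s *\<^sub>R v) \<partial>lborel)" .
    have e1: "(\<integral>z. indicator ?B z * m z \<partial>lborel) = (\<integral>x. indicator ?B (L x) * q x \<partial>lborel)"
      by (rule push[symmetric]) simp
    have "(\<integral>z. indicator ?B z * (m z - m (z - s *\<^sub>R e)) \<partial>lborel)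
        = (\<integral>z. indicator ?B z * m z \<partial>lborel) - (\<integral>z. indicator ?B z * m (z - s *\<^sub>R e) \<partial>lborel)"
      using i1 i2 by (simp add: right_diff_distrib)
    also have "\<dots> = (\<integral>x. indicator ?B (L x) * q x \<partial>lborel) - (\<integral>x. indicator ?B (L x) * q (x - s *\<^sub>R v) \<partial>lborel)"
      using e1 e2 by simp
    also have "\<dots> = (\<integral>x. indicator ?B (L x) * (q x - q (x - s *\<^sub>R v)) \<partial>lborel)"
      using j1 j2 by (simp add: right_diff_distrib)
    also have "\<dots> = - (\<integral>x. w x * (\<integral>t. indicator {0..s} t * indicator ?B (L x + t *\<^sub>R e) \<partial>lborel) \<partial>lborel)"
      by (rule q_side[OF L Lv hbox_borel qd wc qc wi s])
    finally show ?thesis .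
  qed
  have lim1: "(\<lambda>n. \<integral>z. indicator ?B z * ((m z - m (z - ?s n *\<^sub>R e)) / ?s n) \<partial>lborel)
          \<longlonglongrightarrow> (\<integral>z. indicator ?B z * d z \<partial>lborel)"
    by (rule mubar_side[OF md dc mc])
  have lim2: "(\<lambda>n. \<integral>x. w x * ((1 / ?s n) * (\<integral>t. indicator {0..?s n} t * indicator ?B (L x + t *\<^sub>R e) \<partial>lborel)) \<partial>lborel)
          \<longlonglongrightarrow> (\<integral>x. w x * indicator ?B (L x) \<partial>lborel)"
  proof (rule integral_dominated_convergence[where w="\<lambda>x. norm (w x)"])
    show "integrable lborel (\<lambda>x. norm (w x))" using wi by simp
    show "(\<lambda>x. w x * indicator ?B (L x)) \<in> borel_measurable lborel" by measurable
    show "(\<lambda>x. w x * ((1 / ?s n) * (\<integral>t. indicator {0..?s n} t * indicator ?B (L x + t *\<^sub>R e) \<partial>lborel))) \<in> borel_measurable lborel" for n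
      by measurable
    show "AE x in lborel. (\<lambda>n. w x * ((1 / ?s n) * (\<integral>t. indicator {0..?s n} t * indicator ?B (L x + t *\<^sub>R e) \<partial>lborel)))
            \<longlonglongrightarrow> w x * indicator ?B (L x)"
      by (intro AE_I2 tendsto_mult_left inner_int_limit e)
    show "AE x in lborel. norm (w x * ((1 / ?s n) * (\<integral>t. indicator {0..?s n} t * indicator ?B (L x + t *\<^sub>R e) \<partial>lborel))) \<le> norm (w x)" for n
    proof (rule AE_I2)
      fix x
      have "\<bar>\<integral>t. indicator {0..?s n} t * indicator ?B (L x + t *\<^sub>R e) \<partial>lborel\<bar> \<le> ?s n"
        by (rule inner_int_bound) auto
      then have "\<bar>(1 / ?s n) * (\<integral>t. indicator {0..?s n} t * indicator ?B (L x + t *\<^sub>R e) \<partial>lborel)\<bar> \<le> 1"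
        by (simp add: abs_mult field_simps)
      then show "norm (w x * ((1 / ?s n) * (\<integral>t. indicator {0..?s n} t * indicator ?B (L x + t *\<^sub>R e) \<partial>lborel))) \<le> norm (w x)"
        by (simp add: abs_mult mult_left_le)
    qed
  qed
  have eq: "(\<integral>z. indicator ?B z * ((m z - m (z - ?s n *\<^sub>R e)) / ?s n) \<partial>lborel)
          = - (\<integral>x. w x * ((1 / ?s n) * (\<integral>t. indicator {0..?s n} t * indicator ?B (L x + t *\<^sub>R e) \<partial>lborel)) \<partial>lborel)" for n
  proof -
    have "(\<integral>z. indicator ?B z * ((m z - m (z - ?s n *\<^sub>R e)) / ?s n) \<partial>lborel)
        = (\<integral>z. indicator ?B z * (m z - m (z - ?s n *\<^sub>R e)) \<partial>lborel) / ?s n"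
      by (simp add: mult.assoc[symmetric] del: of_nat_Suc)
    also have "\<dots> = - (\<integral>x. w x * (\<integral>t. indicator {0..?s n} t * indicator ?B (L x + t *\<^sub>R e) \<partial>lborel) \<partial>lborel) / ?s n"
      by (subst As) auto
    also have "\<dots> = - (\<integral>x. w x * ((1 / ?s n) * (\<integral>t. indicator {0..?s n} t * indicator ?B (L x + t *\<^sub>R e) \<partial>lborel)) \<partial>lborel)"
      by (simp add: mult.assoc[symmetric] mult.commute[of _ "real (Suc n)"] del: of_nat_Suc) (simp only: mult.assoc integral_mult_right_zero)
    finally show ?thesis .
  qed
  have "(\<integral>z. indicator ?B z * d z \<partial>lborel) = - (\<integral>x. w x * indicator ?B (L x) \<partial>lborel)"
    using lim1 tendsto_minus[OF lim2] unfolding eq by (rule LIMSEQ_unique)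
  then show ?thesis by (simp add: mult.commute)
qed



definition hboxes :: "'b::euclidean_space set set" where
  "hboxes = range (\<lambda>(a, b). hbox a b)"

lemma hbox_Int: "hbox a b \<inter> hbox a' b' = hbox (\<lambda>i. max (a i) (a' i)) (\<lambda>i. min (b i) (b' i))"
  by (auto simp: hbox_def)

lemma Int_stable_hboxes: "Int_stable hboxes"
  unfolding Int_stable_def hboxes_def by (auto simp: hbox_Int)

lemma box_in_hboxes:
  fixes a b :: "'b::euclidean_space"
  shows "box a b \<in> sigma_sets UNIV hboxes"
proof -
  have eq: "box a b = (\<Union>n. hbox (\<lambda>i. a \<bullet> i + 1 / real (Suc n)) (\<lambda>i. b \<bullet> i))"
  proof (intro equalityI subsetI)
    fix z assume z: "z \<in> box a b"
    let ?\<delta> = "Min ((\<lambda>i. z \<bullet> i - a \<bullet> i) ` Basis)"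
    have "?\<delta> > 0" using z by (subst Min_gr_iff) (auto simp: mem_box)
    then obtain n where n: "1 / real (Suc n) < ?\<delta>" by (metis nat_approx_posE)
    have "z \<in> hbox (\<lambda>i. a \<bullet> i + 1 / real (Suc n)) (\<lambda>i. b \<bullet> i)"
    proof -
      have "1 / real (Suc n) < z \<bullet> i - a \<bullet> i" if "i \<in> Basis" for i
        using n Min_le[of "(\<lambda>i. z \<bullet> i - a \<bullet> i) ` Basis" "z \<bullet> i - a \<bullet> i"] that by force
      then show ?thesis using z by (force simp: hbox_def mem_box)
    qed
    then show "z \<in> (\<Union>n. hbox (\<lambda>i. a \<bullet> i + 1 / real (Suc n)) (\<lambda>i. b \<bullet> i))" by blast
  next
    fix z assume "z \<in> (\<Union>n. hbox (\<lambda>i. a \<bullet> i + 1 / real (Suc n)) (\<lambda>i. b \<bullet> i))"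
    then obtain n where "z \<in> hbox (\<lambda>i. a \<bullet> i + 1 / real (Suc n)) (\<lambda>i. b \<bullet> i)" by blast
    then have h: "a \<bullet> i + 1 / real (Suc n) \<le> z \<bullet> i \<and> z \<bullet> i < b \<bullet> i" if "i \<in> Basis" for i
      using that by (auto simp: hbox_def)
    have "0 < 1 / real (Suc n)" by simp
    then show "z \<in> box a b" unfolding mem_box
    proof (intro ballI conjI)
      fix i :: 'b assume i: "i \<in> Basis"
      show "a \<bullet> i < z \<bullet> i" using h[OF i] \<open>0 < 1 / real (Suc n)\<close> by linarith
      show "z \<bullet> i < b \<bullet> i" using h[OF i] by linarith
    qed
  qed
  show ?thesis unfolding eq
    by (intro sigma_sets.Union) (auto simp: hboxes_def)
qed

lemma borel_sub_hboxes: "sets (borel :: 'b::euclidean_space measure) \<subseteq> sigma_sets UNIV hboxes"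
proof -
  have "sets (borel :: 'b measure) = sigma_sets UNIV (range (\<lambda>(a, b). box a b :: 'b set))"
    by (subst borel_eq_box) (simp add: sets_measure_of)
  also have "\<dots> \<subseteq> sigma_sets UNIV hboxes"
    by (rule sigma_sets_mono) (auto intro: box_in_hboxes)
  finally show ?thesis .
qed

lemma hboxes_sub: "hboxes \<subseteq> Pow UNIV" by simp



lemma hbox_d_integrable:
  fixes d :: "'b::euclidean_space \<Rightarrow> real"
  assumes dc: "continuous_on UNIV d"
  shows "integrable lborel (\<lambda>z. indicator (hbox a b) z * d z)"
proof -
  obtain r where r: "\<And>z. z \<in> hbox a b \<Longrightarrow> norm z \<le> r" using hbox_bounded by blast
  have "compact (d ` cball 0 r)"
    by (intro compact_continuous_image continuous_on_subset[OF dc]) auto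
  then obtain C where C: "\<And>y. y \<in> cball 0 r \<Longrightarrow> \<bar>d y\<bar> \<le> C"
    using compact_imp_bounded by (force simp: bounded_iff)
  have dm[measurable]: "d \<in> borel_measurable borel" using dc by (rule borel_measurable_continuous_onI)
  show ?thesis
  proof (rule Bochner_Integration.integrable_bound)
    show "integrable lborel (\<lambda>z. indicator (hbox a b) z * C)"
      using hbox_finite[of a b] by (intro integrable_mult_left integrable_real_indicator) (auto simp: top_unique)
    show "(\<lambda>z. indicator (hbox a b) z * d z) \<in> borel_measurable lborel" by measurable
    show "AE z in lborel. norm (indicator (hbox a b) z * d z) \<le> norm (indicator (hbox a b) z * C)"
    proof (rule AE_I2)
      fix z show "norm (indicator (hbox a b) z * d z) \<le> norm (indicator (hbox a b) z * C)"
        using C[of z] r[of z] by (cases "z \<in> hbox a b") (auto simp: indicator_def)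
    qed
  qed
qed

lemma extend_local:
  fixes d :: "'b::euclidean_space \<Rightarrow> real" and P :: "'a \<Rightarrow> 'b" and W :: "'a \<Rightarrow> real"
  assumes dc: "continuous_on UNIV d" and Pm[measurable]: "P \<in> measurable M borel"
    and Wi: "integrable M W"
    and box: "\<And>a b. (\<integral>z. indicator (hbox a b) z * d z \<partial>lborel) = (\<integral>x. indicator (hbox a b) (P x) * W x \<partial>M)"
    and K: "K \<in> hboxes" and A: "A \<in> sets borel"
  shows "(\<integral>z. indicator (A \<inter> K) z * d z \<partial>lborel) = (\<integral>x. indicator (A \<inter> K) (P x) * W x \<partial>M)"
proof -
  have dm[measurable]: "d \<in> borel_measurable borel" using dc by (rule borel_measurable_continuous_onI)
  have Wm[measurable]: "W \<in> borel_measurable M" using Wi by auto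
  have hsub: "sigma_sets UNIV hboxes \<subseteq> sets (borel :: 'b measure)"
  proof -
    have "hboxes \<subseteq> sets (borel :: 'b measure)" by (auto simp: hboxes_def)
    then show ?thesis using sets.sigma_sets_subset[of hboxes borel] by simp
  qed
  obtain ka kb where Kab: "K = hbox ka kb" using K by (auto simp: hboxes_def)
  have Kb[measurable]: "K \<in> sets borel" using Kab by simp
  have Ki: "integrable lborel (\<lambda>z. indicator K z * d z)" unfolding Kab by (rule hbox_d_integrable[OF dc])
  have I1i: "integrable lborel (\<lambda>z. indicator (S \<inter> K) z * d z)" if S: "S \<in> sets borel" for S
  proof (rule Bochner_Integration.integrable_bound[OF Ki])
    show "(\<lambda>z. indicator (S \<inter> K) z * d z) \<in> borel_measurable lborel" using S by measurable
    show "AE z in lborel. norm (indicator (S \<inter> K) z * d z) \<le> norm (indicator K z * d z)"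
      by (intro AE_I2) (simp add: indicator_def)
  qed
  have I2i: "integrable M (\<lambda>x. indicator S (P x) * W x)" if S: "S \<in> sets borel" for S
  proof (rule Bochner_Integration.integrable_bound[OF Wi])
    show "(\<lambda>x. indicator S (P x) * W x) \<in> borel_measurable M" using S by measurable
    show "AE x in M. norm (indicator S (P x) * W x) \<le> norm (W x)"
      by (intro AE_I2) (simp add: indicator_def)
  qed
  have AG: "A \<in> sigma_sets UNIV hboxes" using A borel_sub_hboxes by blast
  from Int_stable_hboxes hboxes_sub AG show ?thesis
  proof (induction rule: sigma_sets_induct_disjoint)
    case (basic A)
    then have "A \<inter> K \<in> hboxes" using K Int_stable_hboxes unfolding Int_stable_def by blast
    then obtain a b where "A \<inter> K = hbox a b" by (auto simp: hboxes_def)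
    then show ?case using box by simp
  next
    case empty then show ?case by simp
  next
    case (compl A)
    have Ab: "A \<in> sets borel" using compl(1) hsub by blast
    have eq1: "indicator ((UNIV - A) \<inter> K) z = (indicator K z - indicator (A \<inter> K) z :: real)" for z
      by (auto simp: indicator_def)
    have KK: "(\<integral>z. indicator K z * d z \<partial>lborel) = (\<integral>x. indicator K (P x) * W x \<partial>M)"
      using box Kab by simp
    have "(\<integral>z. indicator ((UNIV - A) \<inter> K) z * d z \<partial>lborel)
        = (\<integral>z. indicator K z * d z \<partial>lborel) - (\<integral>z. indicator (A \<inter> K) z * d z \<partial>lborel)"
      unfolding eq1 left_diff_distrib using Ki I1i[OF Ab] by simp
    also have "\<dots> = (\<integral>x. indicator K (P x) * W x \<partial>M) - (\<integral>x. indicator (A \<inter> K) (P x) * W x \<partial>M)"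
      using KK compl(2) by simp
    also have "\<dots> = (\<integral>x. indicator ((UNIV - A) \<inter> K) (P x) * W x \<partial>M)"
      unfolding eq1 left_diff_distrib using I2i[OF Kb] I2i[of "A \<inter> K"] Ab by simp
    finally show ?case .
  next
    case (union A)
    have Ab[measurable]: "A i \<in> sets borel" for i using union(2) hsub by blast
    have disj: "disjoint_family_on (\<lambda>i. A i \<inter> K) S" for S
      unfolding disjoint_family_on_def
    proof (intro ballI impI)
      fix m n :: nat assume "m \<noteq> n"
      then have "A m \<inter> A n = {}" using union(1) unfolding disjoint_family_on_def by blast
      then show "(A m \<inter> K) \<inter> (A n \<inter> K) = {}" by blast
    qed
    have UN: "(\<Union>i. A i) \<inter> K = (\<Union>i. A i \<inter> K)" by blast
    have ind_fin: "indicator (\<Union>i<n. A i \<inter> K) z = (\<Sum>i<n. indicator (A i \<inter> K) z :: real)" for n z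
      using indicator_UN_disjoint[of "{..<n}" "\<lambda>i. A i \<inter> K" z] disj by simp
    have s1: "(\<integral>z. indicator (\<Union>i<n. A i \<inter> K) z * d z \<partial>lborel) = (\<Sum>i<n. \<integral>z. indicator (A i \<inter> K) z * d z \<partial>lborel)" for n
      unfolding ind_fin sum_distrib_right
      by (rule Bochner_Integration.integral_sum) (rule I1i[OF Ab])
    have s2: "(\<integral>x. indicator (\<Union>i<n. A i \<inter> K) (P x) * W x \<partial>M) = (\<Sum>i<n. \<integral>x. indicator (A i \<inter> K) (P x) * W x \<partial>M)" for n
      unfolding ind_fin sum_distrib_right
      by (rule Bochner_Integration.integral_sum) (use Ab in \<open>auto intro: I2i\<close>)
    have UNb[measurable]: "(\<Union>i<n. A i \<inter> K) \<in> sets borel" for n by measurable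
    have UNb'[measurable]: "(\<Union>i. A i \<inter> K) \<in> sets borel" by measurable
    have nb1: "norm (indicator S z * d z) \<le> norm (indicator K z * d z)" if "S \<subseteq> K" for S z
      using that by (cases "z \<in> S") (auto simp: indicator_def)
    have nb2: "norm (indicator S y * W x) \<le> norm (W x)" for S y x
      by (simp add: indicator_def)
    have sK: "(\<Union>i<n. A i \<inter> K) \<subseteq> K" for n by blast
    have lim1: "(\<lambda>n. \<integral>z. indicator (\<Union>i<n. A i \<inter> K) z * d z \<partial>lborel) \<longlonglongrightarrow> (\<integral>z. indicator (\<Union>i. A i \<inter> K) z * d z \<partial>lborel)"
    proof (rule integral_dominated_convergence[where w="\<lambda>z. norm (indicator K z * d z)"])
      show "integrable lborel (\<lambda>z. norm (indicator K z * d z))" using Ki by simp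
      show "(\<lambda>z. indicator (\<Union>i. A i \<inter> K) z * d z) \<in> borel_measurable lborel" using UNb' by measurable
      show "(\<lambda>z. indicator (\<Union>i<n. A i \<inter> K) z * d z) \<in> borel_measurable lborel" for n using UNb[of n] by measurable
      show "AE z in lborel. (\<lambda>n. indicator (\<Union>i<n. A i \<inter> K) z * d z) \<longlonglongrightarrow> indicator (\<Union>i. A i \<inter> K) z * d z"
        by (intro AE_I2 tendsto_mult_right LIMSEQ_indicator_UN)
      show "AE z in lborel. norm (indicator (\<Union>i<n. A i \<inter> K) z * d z) \<le> norm (indicator K z * d z)" for n
        by (intro AE_I2 nb1 sK)
    qed
    have lim2: "(\<lambda>n. \<integral>x. indicator (\<Union>i<n. A i \<inter> K) (P x) * W x \<partial>M) \<longlonglongrightarrow> (\<integral>x. indicator (\<Union>i. A i \<inter> K) (P x) * W x \<partial>M)"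
    proof (rule integral_dominated_convergence[where w="\<lambda>x. norm (W x)"])
      show "integrable M (\<lambda>x. norm (W x))" using Wi by simp
      show "(\<lambda>x. indicator (\<Union>i. A i \<inter> K) (P x) * W x) \<in> borel_measurable M" using UNb' by measurable
      show "(\<lambda>x. indicator (\<Union>i<n. A i \<inter> K) (P x) * W x) \<in> borel_measurable M" for n using UNb[of n] by measurable
      show "AE x in M. (\<lambda>n. indicator (\<Union>i<n. A i \<inter> K) (P x) * W x) \<longlonglongrightarrow> indicator (\<Union>i. A i \<inter> K) (P x) * W x"
        by (intro AE_I2 tendsto_mult_right LIMSEQ_indicator_UN)
      show "AE x in M. norm (indicator (\<Union>i<n. A i \<inter> K) (P x) * W x) \<le> norm (W x)" for n
        by (intro AE_I2 nb2)
    qed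
    have eqs: "(\<Sum>i<n. \<integral>z. indicator (A i \<inter> K) z * d z \<partial>lborel) = (\<Sum>i<n. \<integral>x. indicator (A i \<inter> K) (P x) * W x \<partial>M)" for n
      by (rule sum.cong[OF refl]) (rule union(3))
    have lim1': "(\<lambda>n. \<Sum>i<n. \<integral>x. indicator (A i \<inter> K) (P x) * W x \<partial>M) \<longlonglongrightarrow> (\<integral>z. indicator (\<Union>i. A i \<inter> K) z * d z \<partial>lborel)"
      using lim1 unfolding s1 eqs .
    have lim2': "(\<lambda>n. \<Sum>i<n. \<integral>x. indicator (A i \<inter> K) (P x) * W x \<partial>M) \<longlonglongrightarrow> (\<integral>x. indicator (\<Union>i. A i \<inter> K) (P x) * W x \<partial>M)"
      using lim2 unfolding s2 .
    have "(\<integral>z. indicator (\<Union>i. A i \<inter> K) z * d z \<partial>lborel) = (\<integral>x. indicator (\<Union>i. A i \<inter> K) (P x) * W x \<partial>M)"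
      by (rule LIMSEQ_unique[OF lim1' lim2'])
    then show ?case unfolding UN .
  qed
qed



definition KN :: "nat \<Rightarrow> 'b::euclidean_space set" where
  "KN N = hbox (\<lambda>_. - real N) (\<lambda>_. real N)"

lemma KN_hboxes: "KN N \<in> hboxes" by (auto simp: KN_def hboxes_def)

lemma KN_mono: "N \<le> N' \<Longrightarrow> KN N \<subseteq> KN N'"
  by (force simp: KN_def hbox_def)

lemma KN_eventually: "eventually (\<lambda>N. (z::'b::euclidean_space) \<in> KN N) sequentially"
proof -
  obtain N0 :: nat where N0: "norm z < real N0" using reals_Archimedean2 by blast
  show ?thesis unfolding eventually_sequentially
  proof (intro exI[of _ N0] allI impI)
    fix N assume "N0 \<le> N"
    then have NN: "norm z < real N" using N0 by (meson less_le_trans of_nat_le_iff)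
    have "\<bar>z \<bullet> i\<bar> \<le> norm z" if "i \<in> Basis" for i using Basis_le_norm[OF that] by simp
    then show "z \<in> KN N" using NN by (force simp: KN_def hbox_def abs_le_iff)
  qed
qed

lemma indicator_KN_lim: "(\<lambda>N. indicator (KN N) z * f) \<longlonglongrightarrow> (f :: real)"
proof -
  have "eventually (\<lambda>N. indicator (KN N) z * f = f) sequentially"
    using KN_eventually[of z] by eventually_elim simp
  then show ?thesis by (rule tendsto_eventually)
qed

lemma extend_global:
  fixes d :: "'b::euclidean_space \<Rightarrow> real" and P :: "'a \<Rightarrow> 'b" and W :: "'a \<Rightarrow> real"
  assumes dc: "continuous_on UNIV d" and Pm[measurable]: "P \<in> measurable M borel"
    and Wi: "integrable M W"
    and box: "\<And>a b. (\<integral>z. indicator (hbox a b) z * d z \<partial>lborel) = (\<integral>x. indicator (hbox a b) (P x) * W x \<partial>M)"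
  shows "integrable lborel d"
    and "\<And>A. A \<in> sets borel \<Longrightarrow> (\<integral>z. indicator A z * d z \<partial>lborel) = (\<integral>x. indicator A (P x) * W x \<partial>M)"
proof -
  have dm[measurable]: "d \<in> borel_measurable borel" using dc by (rule borel_measurable_continuous_onI)
  have Wm[measurable]: "W \<in> borel_measurable M" using Wi by auto
  have KNb[measurable]: "KN N \<in> sets borel" for N :: nat by (simp add: KN_def)
  have loc: "(\<integral>z. indicator (A \<inter> KN N) z * d z \<partial>lborel) = (\<integral>x. indicator (A \<inter> KN N) (P x) * W x \<partial>M)"
    if "A \<in> sets borel" for A N
    by (rule extend_local[OF dc Pm Wi box KN_hboxes that])
  have Ki: "integrable lborel (\<lambda>z. indicator (KN N) z * d z)" for N
    unfolding KN_def by (rule hbox_d_integrable[OF dc])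
  have I2b: "\<bar>\<integral>x. indicator S (P x) * W x \<partial>M\<bar> \<le> (\<integral>x. \<bar>W x\<bar> \<partial>M)" if S[measurable]: "S \<in> sets borel" for S
  proof -
    have gi: "integrable M (\<lambda>x. indicator S (P x) * W x)"
    proof (rule Bochner_Integration.integrable_bound[OF Wi])
      show "(\<lambda>x. indicator S (P x) * W x) \<in> borel_measurable M" by measurable
      show "AE x in M. norm (indicator S (P x) * W x) \<le> norm (W x)"
        by (intro AE_I2) (simp add: indicator_def)
    qed
    have "\<bar>\<integral>x. indicator S (P x) * W x \<partial>M\<bar> \<le> (\<integral>x. \<bar>indicator S (P x) * W x\<bar> \<partial>M)"
      by (rule integral_abs_bound)
    also have "\<dots> \<le> (\<integral>x. \<bar>W x\<bar> \<partial>M)"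
      using gi Wi by (intro Bochner_Integration.integral_mono) (auto simp: indicator_def)
    finally show ?thesis .
  qed
  define pos where "pos = {z. 0 \<le> d z}"
  have posb[measurable]: "pos \<in> sets borel" unfolding pos_def by measurable
  define f where "f N z = indicator (KN N) z * \<bar>d z\<bar>" for N z
  have fi: "integrable lborel (f N)" for N
    unfolding f_def using integrable_abs[OF Ki[of N]] by (simp add: abs_mult)
  have fsplit: "f N z = indicator (pos \<inter> KN N) z * d z - indicator ((UNIV - pos) \<inter> KN N) z * d z" for N z
    by (auto simp: f_def pos_def indicator_def)
  have ii: "integrable lborel (\<lambda>z. indicator (S \<inter> KN N) z * d z)" if S[measurable]: "S \<in> sets borel" for S N
  proof (rule Bochner_Integration.integrable_bound[OF Ki])
    show "(\<lambda>z. indicator (S \<inter> KN N) z * d z) \<in> borel_measurable lborel" by measurable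
    show "AE z in lborel. norm (indicator (S \<inter> KN N) z * d z) \<le> norm (indicator (KN N) z * d z)"
      by (intro AE_I2) (simp add: indicator_def)
  qed
  have fbound: "integral\<^sup>L lborel (f N) \<le> 2 * (\<integral>x. \<bar>W x\<bar> \<partial>M)" for N
  proof -
    have "integral\<^sup>L lborel (f N) = (\<integral>z. indicator (pos \<inter> KN N) z * d z \<partial>lborel) - (\<integral>z. indicator ((UNIV - pos) \<inter> KN N) z * d z \<partial>lborel)"
      unfolding fsplit using ii[OF posb, of N] ii[of "UNIV - pos" N] by simp
    also have "\<dots> = (\<integral>x. indicator (pos \<inter> KN N) (P x) * W x \<partial>M) - (\<integral>x. indicator ((UNIV - pos) \<inter> KN N) (P x) * W x \<partial>M)"
      using loc[OF posb, of N] loc[of "UNIV - pos" N] by simp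
    also have "\<dots> \<le> 2 * (\<integral>x. \<bar>W x\<bar> \<partial>M)"
      using I2b[of "pos \<inter> KN N"] I2b[of "(UNIV - pos) \<inter> KN N"] by simp
    finally show ?thesis .
  qed
  have fmono: "f N z \<le> f (Suc N) z" for N z
    using KN_mono[of N "Suc N"] by (auto simp: f_def indicator_def)
  have inc: "incseq (\<lambda>N. integral\<^sup>L lborel (f N))"
    unfolding incseq_Suc_iff by (intro allI Bochner_Integration.integral_mono fi fmono)
  have conv: "(\<lambda>N. integral\<^sup>L lborel (f N)) \<longlonglongrightarrow> (SUP N. integral\<^sup>L lborel (f N))"
    by (rule LIMSEQ_incseq_SUP[OF _ inc]) (use fbound in \<open>auto simp: bdd_above_def\<close>)
  have absi: "integrable lborel (\<lambda>z. \<bar>d z\<bar>)"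
  proof (rule integrable_monotone_convergence[OF fi _ _ conv])
    show "AE z in lborel. mono (\<lambda>N. f N z)" by (intro AE_I2) (simp add: incseq_Suc_iff fmono)
    show "AE z in lborel. (\<lambda>N. f N z) \<longlonglongrightarrow> \<bar>d z\<bar>" by (intro AE_I2) (simp add: f_def indicator_KN_lim)
    show "(\<lambda>z. \<bar>d z\<bar>) \<in> borel_measurable lborel" by measurable
  qed
  then show di: "integrable lborel d" by (simp add: integrable_abs_iff)
  fix A :: "'b set" assume A[measurable]: "A \<in> sets borel"
  have lim1: "(\<lambda>N. \<integral>z. indicator (A \<inter> KN N) z * d z \<partial>lborel) \<longlonglongrightarrow> (\<integral>z. indicator A z * d z \<partial>lborel)"
  proof (rule integral_dominated_convergence[where w="\<lambda>z. norm (d z)"])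
    show "integrable lborel (\<lambda>z. norm (d z))" using absi by simp
    show "(\<lambda>z. indicator A z * d z) \<in> borel_measurable lborel" by measurable
    show "(\<lambda>z. indicator (A \<inter> KN N) z * d z) \<in> borel_measurable lborel" for N by measurable
    show "AE z in lborel. (\<lambda>N. indicator (A \<inter> KN N) z * d z) \<longlonglongrightarrow> indicator A z * d z"
    proof (rule AE_I2)
      fix z
      have "eventually (\<lambda>N. indicator (A \<inter> KN N) z * d z = indicator A z * d z) sequentially"
        using KN_eventually[of z] by eventually_elim (simp add: indicator_def)
      then show "(\<lambda>N. indicator (A \<inter> KN N) z * d z) \<longlonglongrightarrow> indicator A z * d z" by (rule tendsto_eventually)
    qed
    show "AE z in lborel. norm (indicator (A \<inter> KN N) z * d z) \<le> norm (d z)" for N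
      by (intro AE_I2) (simp add: indicator_def)
  qed
  have lim2: "(\<lambda>N. \<integral>x. indicator (A \<inter> KN N) (P x) * W x \<partial>M) \<longlonglongrightarrow> (\<integral>x. indicator A (P x) * W x \<partial>M)"
  proof (rule integral_dominated_convergence[where w="\<lambda>x. norm (W x)"])
    show "integrable M (\<lambda>x. norm (W x))" using Wi by simp
    show "(\<lambda>x. indicator A (P x) * W x) \<in> borel_measurable M" by measurable
    show "(\<lambda>x. indicator (A \<inter> KN N) (P x) * W x) \<in> borel_measurable M" for N by measurable
    show "AE x in M. (\<lambda>N. indicator (A \<inter> KN N) (P x) * W x) \<longlonglongrightarrow> indicator A (P x) * W x"
    proof (rule AE_I2)
      fix x
      have "eventually (\<lambda>N. indicator (A \<inter> KN N) (P x) * W x = indicator A (P x) * W x) sequentially"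
        using KN_eventually[of "P x"] by eventually_elim (simp add: indicator_def)
      then show "(\<lambda>N. indicator (A \<inter> KN N) (P x) * W x) \<longlonglongrightarrow> indicator A (P x) * W x" by (rule tendsto_eventually)
    qed
    show "AE x in M. norm (indicator (A \<inter> KN N) (P x) * W x) \<le> norm (W x)" for N
      by (intro AE_I2) (simp add: indicator_def)
  qed
  show "(\<integral>z. indicator A z * d z \<partial>lborel) = (\<integral>x. indicator A (P x) * W x \<partial>M)"
    using lim1 unfolding loc[OF A] using lim2 by (rule LIMSEQ_unique)
qed



lemma gderiv_of_differentiable:
  fixes f :: "'a::euclidean_space \<Rightarrow> real"
  assumes "f differentiable (at x)"
  shows "GDERIV f x :> grad f x"
proof -
  obtain f' where f': "(f has_derivative f') (at x)" using assms by (auto simp: differentiable_def)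
  have lin: "linear f'" using f' by (rule has_derivative_linear)
  define D where "D = (\<Sum>i\<in>Basis. f' i *\<^sub>R i)"
  have f'D: "f' h = h \<bullet> D" for h
  proof -
    have "f' h = f' (\<Sum>i\<in>Basis. (h \<bullet> i) *\<^sub>R i)" by (simp add: euclidean_representation)
    also have "\<dots> = (\<Sum>i\<in>Basis. (h \<bullet> i) * f' i)"
      using lin by (simp add: linear_sum linear_scale)
    also have "\<dots> = h \<bullet> D" by (simp add: D_def inner_sum_right mult.commute)
    finally show ?thesis .
  qed
  have G: "GDERIV f x :> D"
    unfolding gderiv_def using f' f'D by (metis (no_types) ext)
  have uniq: "D' = D" if "GDERIV f x :> D'" for D'
  proof -
    have "(\<lambda>h. h \<bullet> D') = (\<lambda>h. h \<bullet> D)"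
      using has_derivative_unique that G unfolding gderiv_def by blast
    then have "(D' - D) \<bullet> D' = (D' - D) \<bullet> D" by metis
    then have "(D' - D) \<bullet> (D' - D) = 0" by (simp add: inner_diff_right)
    then show ?thesis by simp
  qed
  have "grad f x = D" unfolding grad_def using G uniq by (rule the_equality)
  then show ?thesis using G by simp
qed

lemma grad_has_derivative:
  fixes f :: "'a::euclidean_space \<Rightarrow> real"
  assumes "f differentiable (at x)"
  shows "(f has_derivative (\<lambda>h. h \<bullet> grad f x)) (at x)"
  using gderiv_of_differentiable[OF assms] unfolding gderiv_def .

lemma grad_unique:
  fixes f :: "'a::euclidean_space \<Rightarrow> real"
  assumes "GDERIV f x :> D"
  shows "grad f x = D"
proof -
  have d: "f differentiable (at x)" using assms unfolding gderiv_def differentiable_def by blast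
  have "(\<lambda>h. h \<bullet> D) = (\<lambda>h. h \<bullet> grad f x)"
    using has_derivative_unique assms grad_has_derivative[OF d] unfolding gderiv_def by blast
  then have "(D - grad f x) \<bullet> D = (D - grad f x) \<bullet> grad f x" by metis
  then have "(D - grad f x) \<bullet> (D - grad f x) = 0" by (simp add: inner_diff_right)
  then show ?thesis by simp
qed

lemma smooth_differentiable:
  assumes "smooth_fun U" shows "U differentiable (at x)"
  using assms unfolding smooth_fun_def by (metis iter_dderiv.simps(1))

lemma smooth_grad_continuous:
  fixes U :: "'a::euclidean_space \<Rightarrow> real"
  assumes sm: "smooth_fun U"
  shows "continuous_on UNIV (grad U)"
proof -
  have comp: "grad U x \<bullet> i = iter_dderiv U [i] x" for x i
  proof -
    have "(U has_derivative (\<lambda>h. h \<bullet> grad U x)) (at x)"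
      by (rule grad_has_derivative[OF smooth_differentiable[OF sm]])
    then have "(\<lambda>h. h \<bullet> grad U x) = frechet_derivative U (at x)" by (rule frechet_derivative_at)
    then show ?thesis by (metis iter_dderiv.simps inner_commute)
  qed
  have eq: "grad U = (\<lambda>x. \<Sum>i\<in>Basis. iter_dderiv U [i] x *\<^sub>R i)"
    by (rule ext) (metis (no_types, lifting) comp euclidean_representation sum.cong)
  have "continuous_on UNIV (iter_dderiv U [i])" for i
  proof -
    have "\<forall>x. iter_dderiv U [i] differentiable (at x)" using sm unfolding smooth_fun_def by blast
    then show ?thesis
      by (intro continuous_at_imp_continuous_on ballI differentiable_imp_continuous_within) auto
  qed
  then show ?thesis unfolding eq by (intro continuous_intros) auto
qed

lemma C1_gderiv:
  fixes m :: "'a::euclidean_space \<Rightarrow> real"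
  assumes "C1_fun m" shows "GDERIV m z :> grad m z" "continuous_on UNIV (grad m)"
  using assms gderiv_of_differentiable unfolding C1_fun_def by auto

lemma line_deriv:
  fixes f :: "'a::euclidean_space \<Rightarrow> real"
  assumes "\<And>y. GDERIV f y :> grad f y"
  shows "((\<lambda>t. f (z + t *\<^sub>R e)) has_real_derivative (grad f (z + t *\<^sub>R e) \<bullet> e)) (at t)"
proof -
  have f: "(f has_derivative (\<lambda>h. h \<bullet> grad f (z + t *\<^sub>R e))) (at (z + t *\<^sub>R e))"
    using assms[of "z + t *\<^sub>R e"] unfolding gderiv_def .
  have l: "((\<lambda>t. z + t *\<^sub>R e) has_derivative (\<lambda>h. h *\<^sub>R e)) (at t)"
    by (auto intro!: derivative_eq_intros)
  have "((\<lambda>t. f (z + t *\<^sub>R e)) has_derivative (\<lambda>h. (h *\<^sub>R e) \<bullet> grad f (z + t *\<^sub>R e))) (at t)"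
    using has_derivative_compose[OF l f] by (simp add: o_def)
  moreover have "(\<lambda>h. (h *\<^sub>R e) \<bullet> grad f (z + t *\<^sub>R e)) = (*) (grad f (z + t *\<^sub>R e) \<bullet> e)"
    by (rule ext) (simp add: inner_commute)
  ultimately show ?thesis
    unfolding has_field_derivative_def by simp
qed

lemma F_PMF_eq:
  fixes m :: "'b::euclidean_space \<Rightarrow> real"
  assumes "\<beta> > 0" and "C1_fun m" and "m z > 0"
  shows "F_PMF \<beta> Z m z = (1 / (\<beta> * m z)) *\<^sub>R grad m z"
proof -
  have gm: "GDERIV m z :> grad m z" using C1_gderiv(1)[OF assms(2)] .
  have l: "GDERIV (\<lambda>z. ln (m z)) z :> (1 / m z) *\<^sub>R grad m z"
    using GDERIV_DERIV_compose[OF gm DERIV_ln[OF assms(3)]]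
    by (simp add: divide_inverse)
  have c: "GDERIV (\<lambda>x. (- (1/\<beta>)) * ln (m x)) z :> ((- (1/\<beta>)) *\<^sub>R ((1 / m z) *\<^sub>R grad m z) + ln (m z) *\<^sub>R 0)"
    by (rule GDERIV_mult[OF GDERIV_const l])
  have "GDERIV (\<lambda>z. - (1/\<beta>) * ln (m z) - (1/\<beta>) * ln Z) z :> (- (1/\<beta>)) *\<^sub>R ((1 / m z) *\<^sub>R grad m z) - 0"
    using GDERIV_diff[OF c GDERIV_const[of "(1/\<beta>) * ln Z" z]] by simp
  then have "grad (U_PMF \<beta> Z m) z = (- (1/\<beta>)) *\<^sub>R ((1 / m z) *\<^sub>R grad m z)"
    by (intro grad_unique) (simp add: U_PMF_def[abs_def])
  then show ?thesis by (simp add: F_PMF_def)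
qed



lemma main_general:
  fixes U :: "'a::euclidean_space \<Rightarrow> real" and m :: "'b::euclidean_space \<Rightarrow> real"
    and L :: "'a \<Rightarrow> 'b" and V :: "'b \<Rightarrow> 'a" and h :: "'a \<Rightarrow> 'b"
  assumes beta: "\<beta> > 0" and sm: "smooth_fun U"
    and Zi: "integrable lborel (\<lambda>x. exp (- \<beta> * U x))"
    and L: "linear L"
    and mdens: "distr (gibbs \<beta> U) lborel L = density lborel (\<lambda>z. ennreal (m z))"
    and mpos: "\<forall>z. m z > 0" and mC1: "C1_fun m"
    and LV: "\<And>b. b \<in> Basis \<Longrightarrow> L (V b) = b"
    and hV: "\<And>x b. b \<in> Basis \<Longrightarrow> h x \<bullet> b = V b \<bullet> force U x"
    and hi: "integrable (gibbs \<beta> U) h"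
  shows "cond_exp_given (gibbs \<beta> U) L h (F_PMF \<beta> (partition_fn \<beta> U) m)"
proof -
  define Z where "Z = partition_fn \<beta> U"
  define q where "q x = exp (- \<beta> * U x) / Z" for x
  have Lm[measurable]: "L \<in> borel_measurable borel"
    using L by (intro borel_measurable_continuous_onI linear_continuous_on linear_conv_bounded_linear[THEN iffD1])
  have Udiff: "U differentiable (at x)" for x by (rule smooth_differentiable[OF sm])
  have Ug: "GDERIV U y :> grad U y" for y by (rule gderiv_of_differentiable[OF Udiff])
  have Uc: "continuous_on UNIV U"
    using Udiff by (intro continuous_at_imp_continuous_on ballI differentiable_imp_continuous_within) auto
  have gUc: "continuous_on UNIV (grad U)" by (rule smooth_grad_continuous[OF sm])
  have Um[measurable]: "U \<in> borel_measurable borel" using Uc by (rule borel_measurable_continuous_onI)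
  have gUm[measurable]: "grad U \<in> borel_measurable borel" using gUc by (rule borel_measurable_continuous_onI)
  have Zpos: "Z > 0"
  proof -
    have nn: "AE x in lborel. 0 \<le> exp (- \<beta> * U x)" by simp
    have "Z \<ge> 0" unfolding Z_def partition_fn_def by (rule integral_nonneg_AE[OF nn])
    moreover have "Z \<noteq> 0"
    proof
      assume "Z = 0"
      then have "AE x in lborel. exp (- \<beta> * U x) = 0"
        using integral_nonneg_eq_0_iff_AE[OF Zi nn] unfolding Z_def partition_fn_def by simp
      then have "AE x in (lborel :: 'a measure). False" by simp
      then have "ae_filter (lborel :: 'a measure) = bot" using trivial_limit_def by blast
      then show False by (simp add: ae_filter_eq_bot_iff)
    qed
    ultimately show ?thesis by simp
  qed
  have qpos: "q x > 0" for x using Zpos by (simp add: q_def)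
  have qc: "continuous_on UNIV q" unfolding q_def using Uc Zpos by (intro continuous_intros) auto
  have qm[measurable]: "q \<in> borel_measurable borel" using qc by (rule borel_measurable_continuous_onI)
  have qi: "integrable lborel q" unfolding q_def using Zi by simp
  have gibbs_eq: "gibbs \<beta> U = density lborel (\<lambda>x. ennreal (q x))"
    by (simp add: gibbs_def q_def Z_def)
  have sets_gibbs: "sets (gibbs \<beta> U) = sets borel" by (simp add: gibbs_eq)
  have mcong: "measurable (gibbs \<beta> U) N = measurable borel N" for N :: "'c measure"
    by (rule measurable_cong_sets[OF sets_gibbs refl])
  have Lmg[measurable]: "L \<in> measurable (gibbs \<beta> U) lborel"
    unfolding mcong using Lm by simp
  have Lmg2[measurable]: "L \<in> borel_measurable (gibbs \<beta> U)"
    unfolding mcong using Lm by simp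
  have hm[measurable]: "h \<in> borel_measurable borel"
    using borel_measurable_integrable[OF hi] unfolding mcong .
  have int_gibbs: "integral\<^sup>L (gibbs \<beta> U) f = (\<integral>x. q x *\<^sub>R f x \<partial>lborel)" if "f \<in> borel_measurable borel" for f :: "'a \<Rightarrow> 'c::{banach, second_countable_topology}"
    unfolding gibbs_eq by (rule integral_density) (use that qpos in \<open>auto intro: less_imp_le\<close>)
  have integrable_gibbs: "integrable (gibbs \<beta> U) f \<longleftrightarrow> integrable lborel (\<lambda>x. q x *\<^sub>R f x)" if "f \<in> borel_measurable borel" for f :: "'a \<Rightarrow> 'c::{banach, second_countable_topology}"
    unfolding gibbs_eq by (rule integrable_density) (use that qpos in \<open>auto intro: less_imp_le\<close>)
  have qhi: "integrable lborel (\<lambda>x. q x *\<^sub>R h x)" using hi integrable_gibbs[OF hm] by simp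
  have mg: "GDERIV m z :> grad m z" for z by (rule C1_gderiv(1)[OF mC1])
  have gmc: "continuous_on UNIV (grad m)" by (rule C1_gderiv(2)[OF mC1])
  have mc: "continuous_on UNIV m"
    using mC1 unfolding C1_fun_def by (intro continuous_at_imp_continuous_on ballI differentiable_imp_continuous_within) auto
  have mm[measurable]: "m \<in> borel_measurable borel" using mc by (rule borel_measurable_continuous_onI)
  have gmm[measurable]: "grad m \<in> borel_measurable borel" using gmc by (rule borel_measurable_continuous_onI)
  have int_distr: "(\<integral>x. f (L x) \<partial>gibbs \<beta> U) = (\<integral>z. m z *\<^sub>R f z \<partial>lborel)" if [measurable]: "f \<in> borel_measurable borel" for f :: "'b \<Rightarrow> 'c::{banach, second_countable_topology}"
  proof -
    have "(\<integral>x. f (L x) \<partial>gibbs \<beta> U) = integral\<^sup>L (distr (gibbs \<beta> U) lborel L) f"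
      by (rule integral_distr[symmetric]) auto
    also have "\<dots> = integral\<^sup>L (density lborel (\<lambda>z. ennreal (m z))) f" by (simp add: mdens)
    also have "\<dots> = (\<integral>z. m z *\<^sub>R f z \<partial>lborel)"
      by (rule integral_density) (use mpos in \<open>auto intro: less_imp_le\<close>)
    finally show ?thesis .
  qed
  have integrable_distr: "integrable (gibbs \<beta> U) (\<lambda>x. f (L x)) \<longleftrightarrow> integrable lborel (\<lambda>z. m z *\<^sub>R f z)" if [measurable]: "f \<in> borel_measurable borel" for f :: "'b \<Rightarrow> 'c::{banach, second_countable_topology}"
  proof -
    have "integrable (gibbs \<beta> U) (\<lambda>x. f (L x)) \<longleftrightarrow> integrable (distr (gibbs \<beta> U) lborel L) f"
      by (rule integrable_distr_eq[symmetric]) auto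
    also have "\<dots> \<longleftrightarrow> integrable (density lborel (\<lambda>z. ennreal (m z))) f" by (simp add: mdens)
    also have "\<dots> \<longleftrightarrow> integrable lborel (\<lambda>z. m z *\<^sub>R f z)"
      by (rule integrable_density) (use mpos in \<open>auto intro: less_imp_le\<close>)
    finally show ?thesis .
  qed
  have mi: "integrable lborel m"
  proof -
    have "integrable (gibbs \<beta> U) (\<lambda>x. (\<lambda>_. 1::real) (L x))"
      using integrable_gibbs[of "\<lambda>_. 1::real"] qi by simp
    then show ?thesis using integrable_distr[of "\<lambda>_. 1::real"] by simp
  qed
  have push: "(\<integral>x. indicator A (L x) * q x \<partial>lborel) = (\<integral>z. indicator A z * m z \<partial>lborel)" if A[measurable]: "A \<in> sets borel" for A
  proof -
    have "(\<integral>x. indicator A (L x) * q x \<partial>lborel) = (\<integral>x. indicator A (L x) \<partial>gibbs \<beta> U)"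
      by (subst int_gibbs) (auto simp: mult.commute)
    also have "\<dots> = (\<integral>z. indicator A z * m z \<partial>lborel)"
      by (subst int_distr) (auto simp: mult.commute)
    finally show ?thesis .
  qed
  have comp: "integrable lborel (\<lambda>z. grad m z \<bullet> b) \<and>
      (\<forall>A\<in>sets borel. (\<integral>z. indicator A z * (grad m z \<bullet> b) \<partial>lborel) = (\<integral>x. indicator A (L x) * (\<beta> * (q x * (h x \<bullet> b))) \<partial>lborel))"
    if b: "b \<in> Basis" for b
  proof -
    define v where "v = V b"
    define w where "w x = \<beta> * q x * (grad U x \<bullet> v)" for x
    have wc: "continuous_on UNIV w" unfolding w_def using qc gUc
      by (intro continuous_intros) auto
    have hb: "h x \<bullet> b = - (grad U x \<bullet> v)" for x
      using hV[OF b, of x] by (simp add: v_def force_def inner_commute)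
    have wh: "w x = - (\<beta> * (q x * (h x \<bullet> b)))" for x by (simp add: w_def hb)
    have hbi: "integrable lborel (\<lambda>x. q x * (h x \<bullet> b))"
      using integrable_inner_left[OF qhi, of b] by simp
    have wi: "integrable lborel w" unfolding wh using hbi by simp
    have qd: "((\<lambda>t. q (x - t *\<^sub>R v)) has_real_derivative w (x - t *\<^sub>R v)) (at t)" for x t
    proof -
      have u: "((\<lambda>t. U (x - t *\<^sub>R v)) has_real_derivative (grad U (x - t *\<^sub>R v) \<bullet> (- v))) (at t)"
        using line_deriv[OF Ug, of x "- v" t] by (simp add: algebra_simps)
      have "((\<lambda>t. exp (- \<beta> * U (x - t *\<^sub>R v)) / Z) has_real_derivative
              (exp (- \<beta> * U (x - t *\<^sub>R v)) * (- \<beta> * (grad U (x - t *\<^sub>R v) \<bullet> (- v))) / Z)) (at t)"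
        using Zpos by (auto intro!: derivative_eq_intros u)
      then show ?thesis by (simp add: q_def w_def algebra_simps)
    qed
    have Lv: "L v = b" using LV[OF b] by (simp add: v_def)
    have md: "((\<lambda>t. m (z + t *\<^sub>R b)) has_real_derivative (grad m (z + t *\<^sub>R b) \<bullet> b)) (at t)" for z t
      by (rule line_deriv[OF mg])
    have dc: "continuous_on UNIV (\<lambda>z. grad m z \<bullet> b)" using gmc by (intro continuous_intros) auto
    have box: "(\<integral>z. indicator (hbox a a') z * (grad m z \<bullet> b) \<partial>lborel) = (\<integral>x. indicator (hbox a a') (L x) * (- w x) \<partial>lborel)" for a a'
      using box_identity[OF L Lv b qd wc qc wi qi md dc mc mi push, of a a'] by simp
    have Wi: "integrable lborel (\<lambda>x. - w x)" using wi by simp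
    have Lmm: "L \<in> measurable lborel borel" using Lm by simp
    note ext = extend_global[OF dc Lmm Wi box]
    show ?thesis using ext by (simp add: wh)
  qed
  define F where "F = F_PMF \<beta> (partition_fn \<beta> U) m"
  have Feq: "F z = (1 / (\<beta> * m z)) *\<^sub>R grad m z" for z
    unfolding F_def using F_PMF_eq[OF beta mC1] mpos by blast
  have Ffun: "F = (\<lambda>z. (1 / (\<beta> * m z)) *\<^sub>R grad m z)" using Feq by (rule ext)
  have Fc: "continuous_on UNIV F" unfolding Ffun using mc gmc mpos beta
    by (intro continuous_intros) (auto simp: less_imp_neq[symmetric])
  have Fm[measurable]: "F \<in> borel_measurable borel" using Fc by (rule borel_measurable_continuous_onI)
  have mF: "m z *\<^sub>R F z = (1 / \<beta>) *\<^sub>R grad m z" for z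
    using mpos[rule_format, of z] beta by (simp add: Feq field_simps)
  have gmi: "integrable lborel (grad m)"
  proof -
    have "integrable lborel (\<lambda>z. \<Sum>b\<in>Basis. (grad m z \<bullet> b) *\<^sub>R b)"
      using comp by (intro Bochner_Integration.integrable_sum integrable_scaleR_left) auto
    then show ?thesis by (simp add: euclidean_representation)
  qed
  have FPi: "integrable (gibbs \<beta> U) (\<lambda>x. F (L x))"
    unfolding integrable_distr[OF Fm] mF using gmi by simp
  have goal3: "(\<integral>x. indicator (L -` A) x *\<^sub>R h x \<partial>gibbs \<beta> U) = (\<integral>x. indicator (L -` A) x *\<^sub>R F (L x) \<partial>gibbs \<beta> U)"
    if A[measurable]: "A \<in> sets borel" for A
  proof (rule euclidean_eqI)
    fix b :: 'b assume b: "b \<in> Basis"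
    have LA: "L -` A \<in> sets (gibbs \<beta> U)" using measurable_sets_borel[OF Lm A] by (simp add: sets_gibbs)
    have i1: "integrable (gibbs \<beta> U) (\<lambda>x. indicator (L -` A) x *\<^sub>R h x)"
      by (rule integrable_mult_indicator[OF LA hi])
    have i2: "integrable (gibbs \<beta> U) (\<lambda>x. indicator (L -` A) x *\<^sub>R F (L x))"
      by (rule integrable_mult_indicator[OF LA FPi])
    have "(\<integral>x. indicator (L -` A) x *\<^sub>R h x \<partial>gibbs \<beta> U) \<bullet> b
        = (\<integral>x. (indicator (L -` A) x *\<^sub>R h x) \<bullet> b \<partial>gibbs \<beta> U)"
      by (rule integral_inner_left[symmetric]) (simp add: i1)
    also have "\<dots> = (\<integral>x. q x *\<^sub>R (indicator A (L x) * (h x \<bullet> b)) \<partial>lborel)"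
      by (subst int_gibbs) (auto simp: indicator_def)
    also have "\<dots> = (\<integral>x. indicator A (L x) * (q x * (h x \<bullet> b)) \<partial>lborel)"
      by (simp add: ac_simps)
    finally have lhs: "(\<integral>x. indicator (L -` A) x *\<^sub>R h x \<partial>gibbs \<beta> U) \<bullet> b
        = (\<integral>x. indicator A (L x) * (q x * (h x \<bullet> b)) \<partial>lborel)" .
    have "(\<integral>x. indicator (L -` A) x *\<^sub>R F (L x) \<partial>gibbs \<beta> U) \<bullet> b
        = (\<integral>x. (indicator (L -` A) x *\<^sub>R F (L x)) \<bullet> b \<partial>gibbs \<beta> U)"
      by (rule integral_inner_left[symmetric]) (simp add: i2)
    also have "\<dots> = (\<integral>x. (\<lambda>z. indicator A z * (F z \<bullet> b)) (L x) \<partial>gibbs \<beta> U)"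
      by (simp add: indicator_def)
    also have "\<dots> = (\<integral>z. m z *\<^sub>R (indicator A z * (F z \<bullet> b)) \<partial>lborel)"
      by (rule int_distr) measurable
    also have "\<dots> = (\<integral>z. (1 / \<beta>) * (indicator A z * (grad m z \<bullet> b)) \<partial>lborel)"
    proof (rule Bochner_Integration.integral_cong[OF refl])
      fix z
      have "m z * (F z \<bullet> b) = (m z *\<^sub>R F z) \<bullet> b" by simp
      also have "\<dots> = (1 / \<beta>) * (grad m z \<bullet> b)" by (simp add: mF)
      finally have e: "m z * (F z \<bullet> b) = (1 / \<beta>) * (grad m z \<bullet> b)" .
      have "m z *\<^sub>R (indicator A z * (F z \<bullet> b)) = indicator A z * (m z * (F z \<bullet> b))" by simp
      also have "\<dots> = (1 / \<beta>) * (indicator A z * (grad m z \<bullet> b))" unfolding e by simp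
      finally show "m z *\<^sub>R (indicator A z * (F z \<bullet> b)) = (1 / \<beta>) * (indicator A z * (grad m z \<bullet> b))" .
    qed
    also have "\<dots> = (1 / \<beta>) * (\<integral>z. indicator A z * (grad m z \<bullet> b) \<partial>lborel)"
      by simp
    also have "\<dots> = (1 / \<beta>) * (\<integral>x. indicator A (L x) * (\<beta> * (q x * (h x \<bullet> b))) \<partial>lborel)"
      using comp[OF b] A by simp
    also have "\<dots> = (\<integral>x. indicator A (L x) * (q x * (h x \<bullet> b)) \<partial>lborel)"
      using beta by (simp add: ac_simps)
    finally show "(\<integral>x. indicator (L -` A) x *\<^sub>R h x \<partial>gibbs \<beta> U) \<bullet> b = (\<integral>x. indicator (L -` A) x *\<^sub>R F (L x) \<partial>gibbs \<beta> U) \<bullet> b"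
      using lhs by simp
  qed
  show ?thesis
    unfolding cond_exp_given_def F_def[symmetric]
    using Fm FPi goal3 by simp
qed



lemma inner_matrix_transpose:
  fixes A :: "real^'n^'m"
  shows "(A *v x) \<bullet> y = x \<bullet> (transpose A *v y)"
  by (metis dot_lmul_matrix inner_commute transpose_matrix_vector)

lemma matrix_inv_props:
  fixes A :: "real^'n^'n"
  assumes "invertible A"
  shows "A ** matrix_inv A = mat 1" "matrix_inv A ** A = mat 1"
  using someI_ex[OF assms[unfolded invertible_def]] unfolding matrix_inv_def by auto

lemma full_row_rank_gram:
  fixes T :: "real^'n^'m"
  assumes "rank T = CARD('m)"
  shows "invertible (T ** transpose T)"
proof -
  have surj: "surj ((*v) T)" using assms full_rank_surjective by blast
  have "inj ((*v) (T ** transpose T))"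
  proof (rule injI)
    fix y z :: "real^'m"
    assume "(T ** transpose T) *v y = (T ** transpose T) *v z"
    then have "(T ** transpose T) *v (y - z) = 0" by (simp add: matrix_vector_mult_diff_distrib)
    then have "T *v (transpose T *v (y - z)) = 0" by (simp add: matrix_vector_mul_assoc del: transpose_matrix_vector)
    then have "(transpose T *v (y - z)) \<bullet> (transpose T *v (y - z)) = 0"
      by (metis inner_matrix_transpose inner_zero_left transpose_transpose inner_commute)
    then have tz: "transpose T *v (y - z) = 0" by simp
    obtain x where "T *v x = y - z" using surj by (metis surjD)
    then have "(y - z) \<bullet> (y - z) = (T *v x) \<bullet> (y - z)" by simp
    also have "\<dots> = x \<bullet> (transpose T *v (y - z))" by (rule inner_matrix_transpose)
    also have "\<dots> = 0" using tz by simp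
    finally show "y = z" by simp
  qed
  then show ?thesis
    by (simp add: invertible_left_inverse matrix_left_invertible_injective)
qed

lemma card_3_prod: "CARD('m::finite \<times> 3) = 3 * CARD('m)"
  by simp

lemma corollary_general:
  fixes \<beta> :: real
    and U :: "real^(('n::finite) \<times> 3) \<Rightarrow> real"
    and Tm :: "real^('n \<times> 3)^(('m::finite) \<times> 3)"
    and mubar :: "real^('m \<times> 3) \<Rightarrow> real"
    and W :: "real^('n \<times> 3)^('m \<times> 3)"
  assumes beta_pos: "\<beta> > 0"
    and U_smooth: "smooth_fun U"
    and Z_finite: "integrable lborel (\<lambda>x. exp (- \<beta> * U x))"
    and mubar_density: "distr (gibbs \<beta> U) lborel (\<lambda>x. Tm *v x)
                          = density lborel (\<lambda>z. ennreal (mubar z))"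
    and mubar_pos: "\<forall>z. mubar z > 0"
    and mubar_C1: "C1_fun mubar"
    and inv: "invertible (W ** transpose Tm)"
    and hi: "integrable (gibbs \<beta> U) (\<lambda>x. matrix_inv (W ** transpose Tm) *v (W *v force U x))"
  shows "cond_exp_given (gibbs \<beta> U) (\<lambda>x. Tm *v x)
              (\<lambda>x. matrix_inv (W ** transpose Tm) *v (W *v force U x))
              (F_PMF \<beta> (partition_fn \<beta> U) mubar)"
proof -
  define G where "G = matrix_inv (W ** transpose Tm) ** W"
  have GT: "G ** transpose Tm = mat 1"
    unfolding G_def using matrix_inv_props(2)[OF inv] by (simp add: matrix_mul_assoc)
  have TG: "Tm ** transpose G = mat 1"
    using arg_cong[OF GT, of transpose] by (simp add: matrix_transpose_mul)
  have hG: "matrix_inv (W ** transpose Tm) *v (W *v y) = G *v y" for y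
    by (simp add: G_def matrix_vector_mul_assoc)
  show ?thesis
  proof (rule main_general[where V="\<lambda>b. transpose G *v b"])
    show "linear ((*v) Tm)" by (rule matrix_vector_mul_linear)
    show "Tm *v (transpose G *v b) = b" for b
      by (simp add: matrix_vector_mul_assoc TG del: transpose_matrix_vector)
    show "(matrix_inv (W ** transpose Tm) *v (W *v force U x)) \<bullet> b = (transpose G *v b) \<bullet> force U x" for x b
      unfolding hG by (subst inner_matrix_transpose) (rule inner_commute)
  qed (use assms in auto)
qed

theorem corollary2:
  fixes \<beta> :: real
    and U :: "real^(('n::finite) \<times> 3) \<Rightarrow> real"
    and \<zeta> :: "real^'n^'m"
    and mubar :: "real^(('m::finite) \<times> 3) \<Rightarrow> real"
  assumes beta_pos: "\<beta> > 0"
    and U_smooth: "smooth_fun U"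
    and Z_finite: "integrable lborel (\<lambda>x. exp (- \<beta> * U x))"
    and rank_T: "rank (block_cg \<zeta>) = 3 * CARD('m)"
    and mubar_density: "distr (gibbs \<beta> U) lborel (\<lambda>x. block_cg \<zeta> *v x)
                          = density lborel (\<lambda>z. ennreal (mubar z))"
    and mubar_pos: "\<forall>z. mubar z > 0"
    and mubar_C1: "C1_fun mubar"
  shows "(\<forall>W :: real^('n \<times> 3)^('m \<times> 3).
            invertible (W ** transpose (block_cg \<zeta>)) \<longrightarrow>
            integrable (gibbs \<beta> U)
              (\<lambda>x. matrix_inv (W ** transpose (block_cg \<zeta>)) *v (W *v force U x)) \<longrightarrow>
            cond_exp_given (gibbs \<beta> U) (\<lambda>x. block_cg \<zeta> *v x)
              (\<lambda>x. matrix_inv (W ** transpose (block_cg \<zeta>)) *v (W *v force U x))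
              (F_PMF \<beta> (partition_fn \<beta> U) mubar))
       \<and> invertible (block_cg \<zeta> ** transpose (block_cg \<zeta>))
       \<and> (integrable (gibbs \<beta> U)
              (\<lambda>x. matrix_inv (block_cg \<zeta> ** transpose (block_cg \<zeta>)) *v (block_cg \<zeta> *v force U x)) \<longrightarrow>
            cond_exp_given (gibbs \<beta> U) (\<lambda>x. block_cg \<zeta> *v x)
              (\<lambda>x. matrix_inv (block_cg \<zeta> ** transpose (block_cg \<zeta>)) *v (block_cg \<zeta> *v force U x))
              (F_PMF \<beta> (partition_fn \<beta> U) mubar))"
proof -
  have gen: "\<forall>W :: real^('n \<times> 3)^('m \<times> 3).
            invertible (W ** transpose (block_cg \<zeta>)) \<longrightarrow>
            integrable (gibbs \<beta> U)
              (\<lambda>x. matrix_inv (W ** transpose (block_cg \<zeta>)) *v (W *v force U x)) \<longrightarrow>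
            cond_exp_given (gibbs \<beta> U) (\<lambda>x. block_cg \<zeta> *v x)
              (\<lambda>x. matrix_inv (W ** transpose (block_cg \<zeta>)) *v (W *v force U x))
              (F_PMF \<beta> (partition_fn \<beta> U) mubar)"
    using corollary_general[OF beta_pos U_smooth Z_finite mubar_density mubar_pos mubar_C1] by blast
  have inv: "invertible (block_cg \<zeta> ** transpose (block_cg \<zeta>))"
    by (rule full_row_rank_gram) (use rank_T in simp)
  show ?thesis using gen inv by blast
qed


end
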